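(* Let $d>1$, let $I$ be a finite set of hidden neurons, $K$ a finite set of samples with data $\mathbf{x}_k\in\mathbb{R}^d$, $y_k\in\mathbb{R}$, and consider the scalar-output ReLU network $\hat y(\mathbf{P};\mathbf{x})=\sum_{i\in I}h_{j_0i}\max(\mathbf{w}_i\cdot\mathbf{x},0)$ with parameters $\mathbf{P}=(\mathbf{w}_i,h_{j_0i})_{i\in I}\in\mathbb{R}^D$ and loss $\mathcal{L}(\mathbf{P})=\frac12\sum_{k\in K}(\hat y(\mathbf{P};\mathbf{x}_k)-y_k)^2$. Let $\mathbf{P}(t)$, $t\ge0$, satisfy $\frac{d\mathbf{P}}{dt}=-\frac{\partial\mathcal{L}}{\partial\mathbf{P}}$, where in the chain rule the derivative of $\mathrm{ReLU}(x)=\max(x,0)$ is taken to be $\mathbbm{1}_{\{x>0\}}$, with initialization $\mathbf{P}(0)=\sigma\mathbf{A}$ for a fixed arbitrary $\mathbf{A}\in\mathbb{R}^D$ and $\sigma>0$. If $\overline{\mathbf{P}}=(\overline{\mathbf{w}}_i,\overline{h}_{j_0i})_{i\in I}$ is a stationary point of $\mathcal{L}$ that is not a local minimum and $\lim_{\sigma\to0^+}\big(\inf_{t}\|\mathbf{P}(t)-\overline{\mathbf{P}}\|\big)=0$, then there exists $i\in I$ with $\overline{\mathbf{w}}_i=\mathbf{0}$ and $\overline{h}_{j_0i}=0$.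
   Context: A point $\overline{\mathbf{P}}$ is a stationary point of $\mathcal{L}$ if $\lim_{\alpha\to0^+}\frac{\mathcal{L}(\overline{\mathbf{P}}+\alpha\mathbf{d})-\mathcal{L}(\overline{\mathbf{P}})}{\alpha}\ge0$ for all $\mathbf{d}\in\mathbb{R}^D$. The trajectory $\mathbf{P}(t)$ depends on $\sigma$. *)

theory Defs
  imports "HOL-Analysis.Analysis"
begin

text \<open>Parameters P = (w_i, h_{j0 i})_{i in I}: an element of (real^'d * real)^'i,
  with P $ i = (w_i, h_{j0 i}). The hidden-neuron set I is the finite type 'i,
  the sample set K the finite type 'k.\<close>

type_synonym ('d, 'i) params = "((real^'d) \<times> real)^'i"

definition relu :: "real \<Rightarrow> real" where
  "relu x = max x 0"

definition net_out :: "('d::finite, 'i::finite) params \<Rightarrow> real^'d \<Rightarrow> real" where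
  "net_out P x = (\<Sum>i\<in>UNIV. snd (P $ i) * relu (fst (P $ i) \<bullet> x))"

definition loss :: "('k::finite \<Rightarrow> real^'d) \<Rightarrow> ('k \<Rightarrow> real) \<Rightarrow> ('d::finite, 'i::finite) params \<Rightarrow> real" where
  "loss xs ys P = (1/2) * (\<Sum>k\<in>UNIV. (net_out P (xs k) - ys k)^2)"

definition loss_grad :: "('k::finite \<Rightarrow> real^'d) \<Rightarrow> ('k \<Rightarrow> real) \<Rightarrow> ('d::finite, 'i::finite) params \<Rightarrow> ('d, 'i) params" where
  "loss_grad xs ys P = (\<chi> i.
     ((\<Sum>k\<in>UNIV. ((net_out P (xs k) - ys k) * snd (P $ i)
                     * (if fst (P $ i) \<bullet> xs k > 0 then 1 else 0)) *\<^sub>R xs k),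
      (\<Sum>k\<in>UNIV. (net_out P (xs k) - ys k) * relu (fst (P $ i) \<bullet> xs k))))"

definition stationary_point :: "('a::real_normed_vector \<Rightarrow> real) \<Rightarrow> 'a \<Rightarrow> bool" where
  "stationary_point L P \<longleftrightarrow>
     (\<forall>d. \<exists>l. ((\<lambda>\<alpha>. (L (P + \<alpha> *\<^sub>R d) - L P) / \<alpha>) \<longlongrightarrow> l) (at_right 0) \<and> l \<ge> 0)"

definition local_min :: "('a::metric_space \<Rightarrow> real) \<Rightarrow> 'a \<Rightarrow> bool" where
  "local_min L P \<longleftrightarrow> (\<exists>e>0. \<forall>Q. dist Q P < e \<longrightarrow> L P \<le> L Q)"

end

theory Submission
  imports Defs
begin

lemma grad_ident:
  "fst (Q$i) \<bullet> fst (loss_grad xs ys Q $ i) = snd (Q$i) * snd (loss_grad xs ys Q $ i)"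
  unfolding loss_grad_def
  by (auto simp: inner_sum_right sum_distrib_left relu_def intro!: sum.cong)

lemma conserve:
  fixes P :: "real \<Rightarrow> ('d::finite, 'i::finite) params"
  assumes der: "\<And>t. t \<ge> 0 \<Longrightarrow> (P has_vector_derivative (- loss_grad xs ys (P t))) (at t within {0..})"
    and t: "t \<ge> 0"
  shows "fst (P t $ i) \<bullet> fst (P t $ i) - snd (P t $ i) * snd (P t $ i)
       = fst (P 0 $ i) \<bullet> fst (P 0 $ i) - snd (P 0 $ i) * snd (P 0 $ i)"
proof -
  define \<Phi> where "\<Phi> = (\<lambda>Q::('d,'i) params. fst (Q$i) \<bullet> fst (Q$i) - snd (Q$i) * snd (Q$i))"
  have D: "(\<Phi> has_derivative (\<lambda>H. fst (Q$i) \<bullet> fst (H$i) + fst (H$i) \<bullet> fst (Q$i)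
            - (snd (Q$i) * snd (H$i) + snd (H$i) * snd (Q$i)))) (at Q within S)" for Q S
  proof -
    have vn: "((\<lambda>x::('d,'i) params. x $ i) has_derivative (\<lambda>x. x $ i)) (at Q within S)"
      by (rule bounded_linear.has_derivative[OF bounded_linear_vec_nth has_derivative_ident])
    show ?thesis unfolding \<Phi>_def
      using has_derivative_diff[OF has_derivative_inner[OF has_derivative_fst[OF vn] has_derivative_fst[OF vn]]
               has_derivative_mult[OF has_derivative_snd[OF vn] has_derivative_snd[OF vn]]] by simp
  qed
  have "\<exists>c. \<forall>s\<in>{0..}. (\<Phi> \<circ> P) s = c"
  proof (rule has_derivative_zero_constant)
    fix s :: real assume s: "s \<in> {0..}"
    have dP: "(P has_derivative (\<lambda>h. h *\<^sub>R (- loss_grad xs ys (P s)))) (at s within {0..})"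
      using der[of s] s by (simp add: has_vector_derivative_def)
    have "((\<Phi> \<circ> P) has_derivative (\<lambda>h. fst (P s$i) \<bullet> fst ((h *\<^sub>R (- loss_grad xs ys (P s)))$i) + fst ((h *\<^sub>R (- loss_grad xs ys (P s)))$i) \<bullet> fst (P s$i)
            - (snd (P s$i) * snd ((h *\<^sub>R (- loss_grad xs ys (P s)))$i) + snd ((h *\<^sub>R (- loss_grad xs ys (P s)))$i) * snd (P s$i)))) (at s within {0..})"
      unfolding comp_def using has_derivative_compose[OF dP D] by simp
    moreover have "(\<lambda>h. fst (P s$i) \<bullet> fst ((h *\<^sub>R (- loss_grad xs ys (P s)))$i) + fst ((h *\<^sub>R (- loss_grad xs ys (P s)))$i) \<bullet> fst (P s$i)
            - (snd (P s$i) * snd ((h *\<^sub>R (- loss_grad xs ys (P s)))$i) + snd ((h *\<^sub>R (- loss_grad xs ys (P s)))$i) * snd (P s$i))) = (\<lambda>h. 0)"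
      using grad_ident[of "P s" i xs ys]
      by (auto simp: inner_commute algebra_simps)
    ultimately show "((\<Phi> \<circ> P) has_derivative (\<lambda>h. 0)) (at s within {0..})" by simp
  qed simp
  then obtain c where "\<forall>s\<in>{0..}. (\<Phi> \<circ> P) s = c" by blast
  then show ?thesis using t unfolding \<Phi>_def by force
qed

lemma relu_lin:
  assumes "a = 0 \<or> \<bar>b\<bar> < \<bar>a\<bar>" "0 \<le> t" "t \<le> 1"
  shows "relu (a + t * b) = relu a + t * (relu (a + b) - relu a)"
proof -
  have tb0: "\<bar>t * b\<bar> \<le> \<bar>b\<bar>" using assms(2,3) by (simp add: abs_mult mult_left_le_one_le)
  have tb: "- \<bar>b\<bar> \<le> t * b" "t * b \<le> \<bar>b\<bar>" "- \<bar>b\<bar> \<le> b" "b \<le> \<bar>b\<bar>"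
    using tb0 by (simp_all add: abs_le_iff)
  consider "a = 0" | "a > 0" "\<bar>b\<bar> < a" | "a < 0" "\<bar>b\<bar> < - a" using assms(1) by linarith
  then show ?thesis
  proof cases
    case 1
    then show ?thesis using assms(2) unfolding relu_def by (simp add: max_def mult_le_0_iff)
  next
    case 2
    then have "a + t * b > 0" "a + b > 0" using tb by linarith+
    then show ?thesis using 2 unfolding relu_def by (simp add: max_def algebra_simps)
  next
    case 3
    then have "a + t * b < 0" "a + b < 0" using tb by linarith+
    then show ?thesis using 3 unfolding relu_def by (simp add: max_def algebra_simps)
  qed
qed

lemma dir_nonneg:
  fixes xs :: "'k::finite \<Rightarrow> real^'d::finite" and Pbar d :: "('d, 'i::finite) params"
  assumes stat: "stationary_point (loss xs ys) Pbar"
    and hz: "\<And>i. snd (d $ i) = 0"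
    and sm: "\<And>i k. fst (Pbar $ i) \<bullet> xs k = 0 \<or> \<bar>fst (d $ i) \<bullet> xs k\<bar> < \<bar>fst (Pbar $ i) \<bullet> xs k\<bar>"
  shows "loss xs ys Pbar \<le> loss xs ys (Pbar + d)"
proof -
  define a where "a i k = fst (Pbar $ i) \<bullet> xs k" for i k
  define b where "b i k = fst (d $ i) \<bullet> xs k" for i k
  define r where "r k = net_out Pbar (xs k) - ys k" for k
  define C where "C k = (\<Sum>i\<in>UNIV. snd (Pbar $ i) * (relu (a i k + b i k) - relu (a i k)))" for k
  define S where "S = (\<Sum>k\<in>UNIV. r k * C k)"
  define T where "T = (\<Sum>k\<in>UNIV. (C k)^2)"
  have out: "net_out (Pbar + t *\<^sub>R d) (xs k) - ys k = r k + t * C k" if "0 \<le> t" "t \<le> 1" for t k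
  proof -
    have "net_out (Pbar + t *\<^sub>R d) (xs k) = (\<Sum>i\<in>UNIV. snd (Pbar $ i) * relu (a i k + t * b i k))"
      unfolding net_out_def a_def b_def using hz
      by (simp add: inner_add_left)
    also have "\<dots> = (\<Sum>i\<in>UNIV. snd (Pbar $ i) * relu (a i k) + t * (snd (Pbar $ i) * (relu (a i k + b i k) - relu (a i k))))"
    proof (rule sum.cong)
      fix i :: 'i
      have "relu (a i k + t * b i k) = relu (a i k) + t * (relu (a i k + b i k) - relu (a i k))"
        using relu_lin[OF _ that] sm[of i k] unfolding a_def b_def by blast
      note eq = this
      show "snd (Pbar $ i) * relu (a i k + t * b i k) = snd (Pbar $ i) * relu (a i k) + t * (snd (Pbar $ i) * (relu (a i k + b i k) - relu (a i k)))"
        by (subst eq) (simp add: algebra_simps)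
    qed simp
    also have "\<dots> = net_out Pbar (xs k) + t * C k"
      unfolding net_out_def C_def a_def by (simp add: sum.distrib sum_distrib_left)
    finally show ?thesis unfolding r_def by simp
  qed
  have L: "loss xs ys (Pbar + t *\<^sub>R d) = loss xs ys Pbar + t * S + t^2 / 2 * T" if "0 \<le> t" "t \<le> 1" for t
  proof -
    have "loss xs ys (Pbar + t *\<^sub>R d) = 1/2 * (\<Sum>k\<in>UNIV. (r k + t * C k)^2)"
      unfolding loss_def using out[OF that] by simp
    also have "\<dots> = 1/2 * (\<Sum>k\<in>UNIV. (r k)^2 + 2 * t * (r k * C k) + t^2 * (C k)^2)"
      by (simp add: power2_eq_square algebra_simps)
    also have "(\<Sum>k\<in>UNIV. (r k)^2 + 2 * t * (r k * C k) + t^2 * (C k)^2) = (\<Sum>k\<in>UNIV. (r k)^2) + 2 * t * S + t^2 * T"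
      by (simp add: sum.distrib sum_distrib_left S_def T_def)
    also have "loss xs ys Pbar = 1/2 * (\<Sum>k\<in>UNIV. (r k)^2)"
      unfolding loss_def r_def by simp
    ultimately show ?thesis by (simp add: algebra_simps)
  qed
  obtain l where l: "((\<lambda>\<alpha>. (loss xs ys (Pbar + \<alpha> *\<^sub>R d) - loss xs ys Pbar) / \<alpha>) \<longlongrightarrow> l) (at_right 0)" "l \<ge> 0"
    using stat unfolding stationary_point_def by blast
  have ev: "eventually (\<lambda>\<alpha>. S + \<alpha> / 2 * T = (loss xs ys (Pbar + \<alpha> *\<^sub>R d) - loss xs ys Pbar) / \<alpha>) (at_right (0::real))"
    unfolding eventually_at_right_field
  proof (intro exI[of _ 1] conjI allI impI)
    fix \<alpha> :: real assume a: "0 < \<alpha>" "\<alpha> < 1"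
    have "loss xs ys (Pbar + \<alpha> *\<^sub>R d) - loss xs ys Pbar = \<alpha> * (S + \<alpha> / 2 * T)"
      using L[of \<alpha>] a by (simp add: power2_eq_square algebra_simps)
    then show "S + \<alpha> / 2 * T = (loss xs ys (Pbar + \<alpha> *\<^sub>R d) - loss xs ys Pbar) / \<alpha>"
      using a by simp
  qed simp
  have "((\<lambda>\<alpha>. S + \<alpha> / 2 * T) \<longlongrightarrow> S + 0 / 2 * T) (at_right (0::real))"
    by (intro tendsto_intros) (simp add: tendsto_ident_at)
  then have limS: "((\<lambda>\<alpha>. (loss xs ys (Pbar + \<alpha> *\<^sub>R d) - loss xs ys Pbar) / \<alpha>) \<longlongrightarrow> S) (at_right 0)"
    using tendsto_cong[OF ev] by simp
  have "S = l" using tendsto_unique[OF trivial_limit_at_right_real limS l(1)] .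
  then have "S \<ge> 0" using l(2) by simp
  moreover have "T \<ge> 0" unfolding T_def by (simp add: sum_nonneg)
  ultimately show ?thesis using L[of 1] by simp
qed


lemma relu_scale: "c \<ge> 0 \<Longrightarrow> relu (c * y) = c * relu y"
  unfolding relu_def by (simp add: max_def mult_le_0_iff)

lemma local_min_nz:
  fixes xs :: "'k::finite \<Rightarrow> real^'d::finite" and Pbar :: "('d, 'i::finite) params"
  assumes stat: "stationary_point (loss xs ys) Pbar"
    and nz: "\<And>i. snd (Pbar $ i) \<noteq> 0"
  shows "local_min (loss xs ys) Pbar"
proof -
  define h where "h i = snd (Pbar $ i)" for i
  define Q' where "Q' Q = (\<chi> i. ((snd (Q$i) / h i) *\<^sub>R fst (Q$i), h i))" for Q :: "('d,'i) params"
  have hnz: "h i \<noteq> 0" for i using nz unfolding h_def by simp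
  have same: "loss xs ys (Q' Q) = loss xs ys Q" if pos: "\<forall>i. snd (Q$i) / h i > 0" for Q
  proof -
    have "net_out (Q' Q) x = net_out Q x" for x
      unfolding net_out_def
    proof (rule sum.cong)
      fix i
      have c: "snd (Q$i) / h i \<ge> 0" using pos by (meson less_imp_le)
      have "relu ((snd (Q$i) / h i) * (fst (Q$i) \<bullet> x)) = (snd (Q$i) / h i) * relu (fst (Q$i) \<bullet> x)"
        by (rule relu_scale[OF c])
      then have "h i * relu ((snd (Q$i) / h i) * (fst (Q$i) \<bullet> x)) = h i * (snd (Q$i) / h i) * relu (fst (Q$i) \<bullet> x)"
        by (simp only: mult.assoc)
      also have "\<dots> = snd (Q$i) * relu (fst (Q$i) \<bullet> x)" using hnz[of i] by simp
      finally show "snd (Q' Q $ i) * relu (fst (Q' Q $ i) \<bullet> x) = snd (Q $ i) * relu (fst (Q $ i) \<bullet> x)"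
        unfolding Q'_def by simp
    qed simp
    then show ?thesis unfolding loss_def by simp
  qed
  have ev1: "eventually (\<lambda>Q. snd (Q$i) / h i > 0) (at Pbar)" for i
  proof -
    have "((\<lambda>Q. snd (Q$i) / h i) \<longlongrightarrow> snd (Pbar$i) / h i) (at Pbar)"
      by (intro tendsto_intros hnz)
    moreover have "snd (Pbar$i) / h i = 1" using hnz[of i] unfolding h_def by simp
    ultimately show ?thesis using order_tendstoD(1)[of _ 1 _ 0] by (metis zero_less_one)
  qed
  have ev2: "eventually (\<lambda>Q. fst (Pbar $ i) \<bullet> xs k = 0 \<or>
      \<bar>(fst (Q' Q $ i) - fst (Pbar $ i)) \<bullet> xs k\<bar> < \<bar>fst (Pbar $ i) \<bullet> xs k\<bar>) (at Pbar)" for i k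
  proof (cases "fst (Pbar $ i) \<bullet> xs k = 0")
    case True then show ?thesis by simp
  next
    case False
    have "((\<lambda>Q. \<bar>((snd (Q$i) / h i) *\<^sub>R fst (Q$i) - fst (Pbar $ i)) \<bullet> xs k\<bar>) \<longlongrightarrow>
           \<bar>((snd (Pbar$i) / h i) *\<^sub>R fst (Pbar$i) - fst (Pbar $ i)) \<bullet> xs k\<bar>) (at Pbar)"
      by (intro tendsto_intros hnz)
    moreover have "\<bar>((snd (Pbar$i) / h i) *\<^sub>R fst (Pbar$i) - fst (Pbar $ i)) \<bullet> xs k\<bar> = 0"
      using hnz[of i] unfolding h_def by simp
    ultimately have "eventually (\<lambda>Q. \<bar>((snd (Q$i) / h i) *\<^sub>R fst (Q$i) - fst (Pbar $ i)) \<bullet> xs k\<bar>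
                < \<bar>fst (Pbar $ i) \<bullet> xs k\<bar>) (at Pbar)"
      using order_tendstoD(2) False by fastforce
    then show ?thesis unfolding Q'_def by (auto elim: eventually_mono)
  qed
  have "eventually (\<lambda>Q. (\<forall>i. snd (Q$i) / h i > 0) \<and> (\<forall>i k. fst (Pbar $ i) \<bullet> xs k = 0 \<or>
      \<bar>(fst (Q' Q $ i) - fst (Pbar $ i)) \<bullet> xs k\<bar> < \<bar>fst (Pbar $ i) \<bullet> xs k\<bar>)) (at Pbar)"
    using ev1 ev2 by (auto simp: eventually_all_finite intro!: eventually_conj)
  then obtain e where e: "e > 0" and eP: "\<And>Q. Q \<noteq> Pbar \<Longrightarrow> dist Q Pbar < e \<Longrightarrow>
      (\<forall>i. snd (Q$i) / h i > 0) \<and> (\<forall>i k. fst (Pbar $ i) \<bullet> xs k = 0 \<or>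
      \<bar>(fst (Q' Q $ i) - fst (Pbar $ i)) \<bullet> xs k\<bar> < \<bar>fst (Pbar $ i) \<bullet> xs k\<bar>)"
    unfolding eventually_at by auto
  show ?thesis
    unfolding local_min_def
  proof (intro exI[of _ e] conjI allI impI e)
    fix Q assume dQ: "dist Q Pbar < e"
    show "loss xs ys Pbar \<le> loss xs ys Q"
    proof (cases "Q = Pbar")
      case True then show ?thesis by simp
    next
      case False
      note QP = eP[OF False dQ]
      have "loss xs ys Pbar \<le> loss xs ys (Pbar + (Q' Q - Pbar))"
      proof (rule dir_nonneg[OF stat])
        show "snd ((Q' Q - Pbar) $ i) = 0" for i unfolding Q'_def h_def by simp
        show "fst (Pbar $ i) \<bullet> xs k = 0 \<or> \<bar>fst ((Q' Q - Pbar) $ i) \<bullet> xs k\<bar> < \<bar>fst (Pbar $ i) \<bullet> xs k\<bar>" for i k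
          using QP by simp
      qed
      also have "\<dots> = loss xs ys Q" using same QP by simp
      finally show ?thesis .
    qed
  qed
qed

theorem corollary2:
  fixes xs :: "'k::finite \<Rightarrow> real^'d::finite"
    and ys :: "'k \<Rightarrow> real"
    and A Pbar :: "('d, 'i::finite) params"
    and traj :: "real \<Rightarrow> real \<Rightarrow> ('d, 'i) params"
  assumes d_gt1: "CARD('d) > 1"
    and init: "\<And>\<sigma>. \<sigma> > 0 \<Longrightarrow> traj \<sigma> 0 = \<sigma> *\<^sub>R A"
    and flow: "\<And>\<sigma> t. \<sigma> > 0 \<Longrightarrow> t \<ge> 0 \<Longrightarrow>
               (traj \<sigma> has_vector_derivative (- loss_grad xs ys (traj \<sigma> t))) (at t within {0..})"
    and stat: "stationary_point (loss xs ys) Pbar"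
    and not_min: "\<not> local_min (loss xs ys) Pbar"
    and conv: "((\<lambda>\<sigma>. INF t\<in>{0..}. norm (traj \<sigma> t - Pbar)) \<longlongrightarrow> 0) (at_right 0)"
  shows "\<exists>i. fst (Pbar $ i) = 0 \<and> snd (Pbar $ i) = 0"
proof (rule ccontr)
  assume H: "\<not> (\<exists>i. fst (Pbar $ i) = 0 \<and> snd (Pbar $ i) = 0)"
  have bal: "fst (Pbar $ i) \<bullet> fst (Pbar $ i) - snd (Pbar $ i) * snd (Pbar $ i) = 0" for i
  proof (rule ccontr)
    define g where "g Q = fst (Q $ i) \<bullet> fst (Q $ i) - snd (Q $ i) * snd (Q $ i)" for Q :: "('d,'i) params"
    assume "fst (Pbar $ i) \<bullet> fst (Pbar $ i) - snd (Pbar $ i) * snd (Pbar $ i) \<noteq> 0"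
    then have dpos: "\<bar>g Pbar\<bar> > 0" unfolding g_def by simp
    define \<delta> where "\<delta> = \<bar>g Pbar\<bar>"
    have cons: "g (traj \<sigma> t) = \<sigma>^2 * g A" if "\<sigma> > 0" "t \<ge> 0" for \<sigma> t
    proof -
      have "g (traj \<sigma> t) = g (traj \<sigma> 0)"
        unfolding g_def by (rule conserve[OF flow[OF that(1)] that(2)])
      also have "\<dots> = \<sigma>^2 * g A" unfolding init[OF that(1)] g_def
        by (simp add: power2_eq_square algebra_simps)
      finally show ?thesis .
    qed
    have "(g \<longlongrightarrow> g Pbar) (at Pbar)"
      unfolding g_def by (intro tendsto_intros)
    then have "eventually (\<lambda>Q. dist (g Q) (g Pbar) < \<delta>/2) (at Pbar)"
    proof -
      have "\<delta>/2 > 0" using dpos unfolding \<delta>_def by simp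
      then show ?thesis using \<open>(g \<longlongrightarrow> g Pbar) (at Pbar)\<close> unfolding tendsto_iff by blast
    qed
    then obtain \<eta> where eta: "\<eta> > 0" and etaP: "\<And>Q. Q \<noteq> Pbar \<Longrightarrow> dist Q Pbar < \<eta> \<Longrightarrow> dist (g Q) (g Pbar) < \<delta>/2"
      unfolding eventually_at by auto
    have hd: "\<delta>/2 > 0" using dpos unfolding \<delta>_def by simp
    have etaP': "\<bar>g Q - g Pbar\<bar> < \<delta>/2" if "dist Q Pbar < \<eta>" for Q
    proof (cases "Q = Pbar")
      case True then show ?thesis using hd by simp
    next
      case False then show ?thesis using etaP[OF False that] by (simp only: dist_real_def)
    qed
    have e1: "eventually (\<lambda>\<sigma>. (INF t\<in>{0..}. norm (traj \<sigma> t - Pbar)) < \<eta>) (at_right (0::real))"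
      using order_tendstoD(2)[OF conv eta] .
    have "((\<lambda>\<sigma>::real. \<sigma>^2 * \<bar>g A\<bar>) \<longlongrightarrow> 0^2 * \<bar>g A\<bar>) (at_right 0)"
      by (intro tendsto_intros)
    then have lim0: "((\<lambda>\<sigma>::real. \<sigma>^2 * \<bar>g A\<bar>) \<longlongrightarrow> 0) (at_right 0)" by simp
    have e2: "eventually (\<lambda>\<sigma>::real. \<sigma>^2 * \<bar>g A\<bar> < \<delta>/2) (at_right 0)"
      using order_tendstoD(2)[OF lim0 hd] .
    have ev: "eventually (\<lambda>\<sigma>::real. 0 < \<sigma> \<and> ((INF t\<in>{0..}. norm (traj \<sigma> t - Pbar)) < \<eta> \<and> \<sigma>^2 * \<bar>g A\<bar> < \<delta>/2)) (at_right 0)"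
      by (rule eventually_conj[OF eventually_at_right_less eventually_conj[OF e1 e2]])
    obtain \<sigma> :: real where s: "\<sigma> > 0" "(INF t\<in>{0..}. norm (traj \<sigma> t - Pbar)) < \<eta>" "\<sigma>^2 * \<bar>g A\<bar> < \<delta>/2"
      using eventually_happens'[OF trivial_limit_at_right_real ev] by blast
    have ne: "(\<lambda>t. norm (traj \<sigma> t - Pbar)) ` {0..} \<noteq> {}" by simp
    obtain y where y: "y \<in> (\<lambda>t. norm (traj \<sigma> t - Pbar)) ` {0..}" "y < \<eta>"
      using cInf_lessD[OF ne s(2)] by blast
    then obtain t :: real where t: "t \<ge> 0" "norm (traj \<sigma> t - Pbar) < \<eta>" by auto
    have "\<bar>g (traj \<sigma> t) - g Pbar\<bar> < \<delta>/2" using etaP' t(2) by (simp add: dist_norm)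
    moreover have "\<bar>g (traj \<sigma> t)\<bar> < \<delta>/2" using cons[OF s(1) t(1)] s(3) by (simp add: abs_mult)
    ultimately show False unfolding \<delta>_def by linarith
  qed
  have nz: "snd (Pbar $ i) \<noteq> 0" for i
  proof
    assume "snd (Pbar $ i) = 0"
    with bal[of i] have "fst (Pbar $ i) = 0" by simp
    with H \<open>snd (Pbar $ i) = 0\<close> show False by blast
  qed
  have "local_min (loss xs ys) Pbar" by (rule local_min_nz[OF stat nz])
  with not_min show False by simp
qed

end
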